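(* Let $W$ be a binary symmetric channel (input and output alphabet $\{0,1\}$, crossover probability $p$), $N=2^n$, and $0\le i\le N-1$. Then for every $\mathbf{y}\in\mathbb{F}_2^N$ there exists $\mathbf{v}\in\mathbb{F}_2^N$ with $v_{i+1}=\dots=v_N=0$ and $W_N^{(i)}(\mathbf{v})=W_N^{(i)}(\mathbf{y})$. Consequently the set of values $\{W_N^{(i)}(\mathbf{y}):\mathbf{y}\in\mathbb{F}_2^N\}$ equals $\{W_N^{(i)}(\mathbf{y}):\mathbf{y}\in\mathbb{F}_2^N,\ y_{i+1}^N=0\}$, and the number of equivalence classes is at most $2^i$.
   Context: $G_N=F^{\otimes n}$ with $F=\begin{pmatrix}1&0\\1&1\end{pmatrix}$ over $\mathbb{F}_2$; $A(N,i)$ is the submatrix of rows $i+1,\dots,N$ of $G_N$, with row space $\mathrm{row}(A(N,i))$. For the BSC, $W^N(\mathbf{y}|\mathbf{x})=\prod_j W(y_j|x_j)$ with $W(y|x)=1-p$ if $y=x$ and $p$ otherwise. Define $W_N^{(i)}(\mathbf{y})=\frac{1}{2^{N-1}}\sum_{\mathbf{c}\in\mathrm{row}(A(N,i))}W^N(\mathbf{y}|\mathbf{c})$ (the transition probability of bit channel $i$ with all previous bits and the current bit equal to $0$). Equivalence classes: classes of vectors with equal value of $W_N^{(i)}$. *)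

theory Defs
  imports Complex_Main
begin

text \<open>Vectors in F_2^N are functions nat => bool (True = 1), indices 0..N-1
  (paper index k corresponds to index k-1 here), zero outside.\<close>

definition vecs :: "nat \<Rightarrow> (nat \<Rightarrow> bool) set" where
  "vecs N = {v. \<forall>j\<ge>N. \<not> v j}"

text \<open>The kernel F = [[1,0],[1,1]] over F_2, entries indexed by 0,1.\<close>
definition Fker :: "nat \<Rightarrow> nat \<Rightarrow> bool" where
  "Fker a b \<longleftrightarrow> a < 2 \<and> b < 2 \<and> b \<le> a"

text \<open>Kronecker power G_{2^n} = F^{(x)n} = F (x) F^{(x)(n-1)}, entries (0-indexed row r, column c).\<close>
fun Gmat :: "nat \<Rightarrow> nat \<Rightarrow> nat \<Rightarrow> bool" where
  "Gmat 0 r c \<longleftrightarrow> r = 0 \<and> c = 0"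
| "Gmat (Suc n) r c \<longleftrightarrow>
     Fker (r div 2^n) (c div 2^n) \<and> Gmat n (r mod 2^n) (c mod 2^n)"

definition Grow :: "nat \<Rightarrow> nat \<Rightarrow> (nat \<Rightarrow> bool)" where
  "Grow n r = (\<lambda>c. c < 2^n \<and> Gmat n r c)"

text \<open>Row space over F_2 of A(N,i) = rows i+1..N (1-indexed), i.e. rows i..N-1 (0-indexed):
  all F_2-linear combinations, i.e. sums of subsets of these rows.\<close>
definition rowA :: "nat \<Rightarrow> nat \<Rightarrow> (nat \<Rightarrow> bool) set" where
  "rowA n i = {(\<lambda>c. odd (card {r \<in> S. Grow n r c})) | S. S \<subseteq> {i..<2^n}}"

definition WN :: "real \<Rightarrow> nat \<Rightarrow> (nat \<Rightarrow> bool) \<Rightarrow> (nat \<Rightarrow> bool) \<Rightarrow> real" where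
  "WN p N y x = (\<Prod>j<N. if y j = x j then 1 - p else p)"

definition Wbit :: "real \<Rightarrow> nat \<Rightarrow> nat \<Rightarrow> (nat \<Rightarrow> bool) \<Rightarrow> real" where
  "Wbit p n i y = (1 / 2 ^ (2^n - 1)) * (\<Sum>c\<in>rowA n i. WN p (2^n) y c)"

end

theory Submission
  imports Defs
begin

lemma Gmat_tri: "Gmat n r c \<Longrightarrow> c \<le> r"
proof (induction n arbitrary: r c)
  case 0 then show ?case by simp
next
  case (Suc n)
  hence a: "c div 2^n \<le> r div 2^n" and b: "c mod 2^n \<le> r mod 2^n"
    by (auto simp: Fker_def)
  have "c = 2^n * (c div 2^n) + c mod 2^n" by simp
  also have "\<dots> \<le> 2^n * (r div 2^n) + r mod 2^n"
    using a b by (intro add_mono) auto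
  also have "\<dots> = r" by simp
  finally show ?case .
qed

lemma Gmat_diag: "r < 2^n \<Longrightarrow> Gmat n r r"
proof (induction n arbitrary: r)
  case 0 then show ?case by simp
next
  case (Suc n)
  have "r div 2^n < 2" using Suc.prems by (simp add: less_mult_imp_div_less mult.commute)
  then show ?case using Suc by (simp add: Fker_def)
qed

lemma odd_symdiff:
  assumes "finite A" "finite B"
  shows "odd (card ((A - B) \<union> (B - A))) = (odd (card A) \<noteq> odd (card B))"
proof -
  have "(A - B) \<union> (B - A) = (A \<union> B) - (A \<inter> B)" by blast
  hence "card ((A - B) \<union> (B - A)) = card (A \<union> B) - card (A \<inter> B)"
    using assms card_Diff_subset[of "A \<inter> B" "A \<union> B"] by auto
  moreover have "card A + card B = card (A \<union> B) + card (A \<inter> B)"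
    using assms card_Un_Int by blast
  moreover have "card (A \<inter> B) \<le> card (A \<union> B)"
    using assms by (intro card_mono) auto
  ultimately have "card A + card B = card ((A - B) \<union> (B - A)) + 2 * card (A \<inter> B)"
    by simp
  then show ?thesis by (metis even_add even_mult_iff even_numeral)
qed

definition par :: "nat \<Rightarrow> nat set \<Rightarrow> nat \<Rightarrow> bool" where
  "par n S = (\<lambda>c. odd (card {r \<in> S. Grow n r c}))"

lemma rowA_par: "rowA n i = {par n S | S. S \<subseteq> {i..<2^n}}"
  unfolding rowA_def par_def by simp

lemma par_xor:
  assumes "finite S" "finite T"
  shows "par n ((S - T) \<union> (T - S)) = (\<lambda>j. par n S j \<noteq> par n T j)"
proof
  fix j
  have "{r \<in> (S - T) \<union> (T - S). Grow n r j} =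
        ({r\<in>S. Grow n r j} - {r\<in>T. Grow n r j}) \<union> ({r\<in>T. Grow n r j} - {r\<in>S. Grow n r j})"
    by blast
  then show "par n ((S - T) \<union> (T - S)) j = (par n S j \<noteq> par n T j)"
    unfolding par_def using odd_symdiff[of "{r\<in>S. Grow n r j}" "{r\<in>T. Grow n r j}"] assms
    by simp
qed

lemma rowA_xor:
  assumes "c \<in> rowA n i" "d \<in> rowA n i"
  shows "(\<lambda>j. c j \<noteq> d j) \<in> rowA n i"
proof -
  obtain S T where S: "S \<subseteq> {i..<2^n}" "c = par n S" and T: "T \<subseteq> {i..<2^n}" "d = par n T"
    using assms unfolding rowA_par by blast
  have fin: "finite S" "finite T" using S T finite_subset by auto
  have "(S - T) \<union> (T - S) \<subseteq> {i..<2^n}" using S T by blast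
  moreover have "(\<lambda>j. c j \<noteq> d j) = par n ((S - T) \<union> (T - S))"
    using S(2) T(2) par_xor[OF fin, of n] by simp
  ultimately show ?thesis unfolding rowA_par by blast
qed

lemma elim:
  assumes "i \<le> k" "k \<le> 2^n" "\<forall>j\<ge>k. \<not> y j"
  shows "\<exists>S \<subseteq> {i..<k}. \<forall>j\<ge>i. y j = par n S j"
  using assms
proof (induction k arbitrary: y)
  case 0
  then show ?case by (auto simp: par_def)
next
  case (Suc k)
  show ?case
  proof (cases "i = Suc k")
    case True
    then show ?thesis using Suc.prems by (intro exI[of _ "{}"]) (auto simp: par_def)
  next
    case False
    hence ik: "i \<le> k" "k \<le> 2^n" "k < 2^n" using Suc.prems by auto
    show ?thesis
    proof (cases "y k")
      case False
      have "\<forall>j\<ge>k. \<not> y j"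
      proof (intro allI impI)
        fix j assume "k \<le> j"
        then show "\<not> y j" using Suc.prems(3) False by (cases "j = k") auto
      qed
      from Suc.IH[OF ik(1) ik(2) this]
      obtain S where "S \<subseteq> {i..<k}" "\<forall>j\<ge>i. y j = par n S j"
        by (elim exE conjE)
      then show ?thesis by (intro exI[of _ S]) auto
    next
      case True
      define y' where "y' = (\<lambda>j. y j \<noteq> Grow n k j)"
      have gk: "Grow n k k" using ik Gmat_diag by (simp add: Grow_def)
      have gj: "k < j \<Longrightarrow> \<not> Grow n k j" for j using Gmat_tri[of n k j] by (auto simp: Grow_def)
      have "\<forall>j\<ge>k. \<not> y' j"
      proof (intro allI impI)
        fix j assume "k \<le> j"
        then consider "j = k" | "j > k" by linarith
        then show "\<not> y' j"
        proof cases
          case 1 then show ?thesis using True gk by (simp add: y'_def)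
        next
          case 2 then show ?thesis using Suc.prems(3) gj[OF 2] by (simp add: y'_def)
        qed
      qed
      from Suc.IH[OF ik(1) ik(2) this]
      obtain S where S: "S \<subseteq> {i..<k}" "\<forall>j\<ge>i. y' j = par n S j"
        by (elim exE conjE)
      have fS: "finite S" using S(1) finite_subset by blast
      have kS: "k \<notin> S" using S(1) by auto
      have "\<forall>j\<ge>i. y j = par n (insert k S) j"
      proof (intro allI impI)
        fix j assume "i \<le> j"
        have e: "{r \<in> insert k S. Grow n r j} =
           (if Grow n k j then insert k {r\<in>S. Grow n r j} else {r\<in>S. Grow n r j})" by auto
        have "par n (insert k S) j = (Grow n k j \<noteq> par n S j)"
          unfolding par_def e using fS kS by auto
        moreover have "y' j = par n S j" using S(2) \<open>i \<le> j\<close> by blast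
        ultimately show "y j = par n (insert k S) j" unfolding y'_def by blast
      qed
      moreover have "insert k S \<subseteq> {i..<Suc k}" using S(1) ik by auto
      ultimately show ?thesis by blast
    qed
  qed
qed

lemma Wbit_shift:
  assumes "c \<in> rowA n i"
  shows "Wbit p n i (\<lambda>j. y j \<noteq> c j) = Wbit p n i y"
proof -
  have "(\<Sum>d\<in>rowA n i. WN p (2^n) (\<lambda>j. y j \<noteq> c j) d)
      = (\<Sum>d\<in>rowA n i. WN p (2^n) y (\<lambda>j. c j \<noteq> d j))"
    by (intro sum.cong refl) (auto simp: WN_def intro!: prod.cong)
  also have "\<dots> = (\<Sum>d\<in>rowA n i. WN p (2^n) y d)"
    by (rule sum.reindex_bij_witness[of _ "\<lambda>d j. c j \<noteq> d j" "\<lambda>d j. c j \<noteq> d j"])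
       (use rowA_xor[OF assms] in auto)
  finally show ?thesis unfolding Wbit_def by simp
qed

theorem corollary2:
  fixes p :: real and n i :: nat
  assumes "0 \<le> p" and "p \<le> 1" and "i < 2^n"
  shows "(\<forall>y\<in>vecs (2^n). \<exists>v\<in>vecs (2^n). (\<forall>j. i \<le> j \<longrightarrow> \<not> v j)
              \<and> Wbit p n i v = Wbit p n i y)
     \<and> Wbit p n i ` vecs (2^n) = Wbit p n i ` {y \<in> vecs (2^n). \<forall>j. i \<le> j \<longrightarrow> \<not> y j}
     \<and> card (Wbit p n i ` vecs (2^n)) \<le> 2^i"
proof -
  have A: "\<forall>y\<in>vecs (2^n). \<exists>v\<in>vecs (2^n). (\<forall>j. i \<le> j \<longrightarrow> \<not> v j)
              \<and> Wbit p n i v = Wbit p n i y"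
  proof
    fix y assume y: "y \<in> vecs (2^n)"
    obtain S where S: "S \<subseteq> {i..<2^n}" "\<forall>j\<ge>i. y j = par n S j"
      using elim[of i "2^n" n y] y assms(3) by (auto simp: vecs_def)
    have cS: "par n S \<in> rowA n i" using S(1) unfolding rowA_par by blast
    define v where "v = (\<lambda>j. y j \<noteq> par n S j)"
    have "v \<in> vecs (2^n)" using y by (auto simp: v_def vecs_def par_def Grow_def)
    moreover have "\<forall>j. i \<le> j \<longrightarrow> \<not> v j" using S(2) by (simp add: v_def)
    moreover have "Wbit p n i v = Wbit p n i y" unfolding v_def by (rule Wbit_shift[OF cS])
    ultimately show "\<exists>v\<in>vecs (2^n). (\<forall>j. i \<le> j \<longrightarrow> \<not> v j) \<and> Wbit p n i v = Wbit p n i y"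
      by blast
  qed
  define Y where "Y = {y \<in> vecs (2^n). \<forall>j. i \<le> j \<longrightarrow> \<not> y j}"
  have B: "Wbit p n i ` vecs (2^n) = Wbit p n i ` Y"
  proof
    show "Wbit p n i ` vecs (2^n) \<subseteq> Wbit p n i ` Y"
    proof
      fix w assume "w \<in> Wbit p n i ` vecs (2^n)"
      then obtain y where y: "y \<in> vecs (2^n)" "w = Wbit p n i y" by blast
      then obtain v where "v \<in> vecs (2^n)" "\<forall>j. i \<le> j \<longrightarrow> \<not> v j" "Wbit p n i v = Wbit p n i y"
        using A by blast
      then have "v \<in> Y" "w = Wbit p n i v" unfolding Y_def using y by auto
      then show "w \<in> Wbit p n i ` Y" by blast
    qed
    show "Wbit p n i ` Y \<subseteq> Wbit p n i ` vecs (2^n)" unfolding Y_def by blast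
  qed
  have Yeq: "Y \<subseteq> (\<lambda>S j. j \<in> S) ` Pow {..<i}"
  proof
    fix y assume "y \<in> Y"
    hence "y = (\<lambda>j. j \<in> {j. y j})" "{j. y j} \<in> Pow {..<i}"
      unfolding Y_def by (auto simp: not_less[symmetric])
    then show "y \<in> (\<lambda>S j. j \<in> S) ` Pow {..<i}" by blast
  qed
  have fin: "finite ((\<lambda>S j. j \<in> S) ` Pow {..<i})" by simp
  have "card (Wbit p n i ` Y) \<le> card Y" using finite_subset[OF Yeq fin] card_image_le by blast
  also have "\<dots> \<le> card ((\<lambda>S j. j \<in> S) ` Pow {..<i})" using Yeq fin card_mono by blast
  also have "\<dots> \<le> card (Pow {..<i})" using card_image_le by blast
  also have "\<dots> = 2^i" by (simp add: card_Pow)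
  finally have C: "card (Wbit p n i ` vecs (2^n)) \<le> 2^i" using B by simp
  show ?thesis using A B C unfolding Y_def by blast
qed

end
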